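(* Let $\delta\in(0,1)$ and let $S \subset [p]$ with $|S| = s$ satisfy $M(S) := |S \triangle S^\star|/2 \ge \delta s$, where $S^\star = \operatorname{supp}(\beta^\star)$. Let $\Delta(S) := \|Y - X\mathbb{1}_S\|_2^2 - \|Y - X\mathbb{1}_{S^\star}\|_2^2$. Then $$ \mathbb{P}(\Delta(S) \le 0) \le \left(1 + \frac{\delta(2\sigma_2^2 - \sigma_1^2) s}{2\sigma_2^4}\right)^{-n_1/2}\left(1 + \frac{\delta s}{2\sigma_2^2}\right)^{-n_2/2}. $$
   Context: Sample sizes $n_1,n_2\ge1$, $n = n_1+n_2$. $X\in\mathbb{R}^{n\times p}$ has i.i.d. $\mathcal{N}(0,1)$ entries; $0<\sigma_1^2<\sigma_2^2$; $\Sigma = \begin{pmatrix} \sigma_1 I_{n_1} & 0 \\ 0 & \sigma_2 I_{n_2}\end{pmatrix}$; $W\sim\mathcal{N}(0,I_n)$ independent of $X$; $Z = \Sigma W$; $Y = X\beta^\star + Z$ with $\beta^\star\in\{0,1\}^p$ deterministic having exactly $s$ ones. For $S\subset[p]$, $\mathbb{1}_S\in\{0,1\}^p$ is the indicator vector of $S$. $A\triangle B = (A\cup B)\setminus(A\cap B)$. *)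

theory Defs
  imports "HOL-Probability.Probability"
begin

definition std_gauss :: "real measure" where
  "std_gauss = density lborel std_normal_density"

text \<open>Index set of the independent standard Gaussians: entries X_ij (i<n, j<p) as Inl (i,j)
  and entries W_i (i<n) as Inr i.\<close>
definition gidx :: "nat \<Rightarrow> nat \<Rightarrow> (nat \<times> nat + nat) set" where
  "gidx n p = Inl ` ({0..<n} \<times> {0..<p}) \<union> Inr ` {0..<n}"

definition gauss_model :: "nat \<Rightarrow> nat \<Rightarrow> ((nat \<times> nat + nat) \<Rightarrow> real) measure" where
  "gauss_model n p = (\<Pi>\<^sub>M k\<in>gidx n p. std_gauss)"

definition Xmat :: "((nat \<times> nat + nat) \<Rightarrow> real) \<Rightarrow> nat \<Rightarrow> nat \<Rightarrow> real" where
  "Xmat \<omega> i j = \<omega> (Inl (i, j))"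

definition Wvec :: "((nat \<times> nat + nat) \<Rightarrow> real) \<Rightarrow> nat \<Rightarrow> real" where
  "Wvec \<omega> i = \<omega> (Inr i)"

definition Zvec :: "nat \<Rightarrow> real \<Rightarrow> real \<Rightarrow> ((nat \<times> nat + nat) \<Rightarrow> real) \<Rightarrow> nat \<Rightarrow> real" where
  "Zvec n1 \<sigma>1 \<sigma>2 \<omega> i = (if i < n1 then \<sigma>1 else \<sigma>2) * Wvec \<omega> i"

definition Yvec :: "nat \<Rightarrow> nat \<Rightarrow> real \<Rightarrow> real \<Rightarrow> (nat \<Rightarrow> real) \<Rightarrow> ((nat \<times> nat + nat) \<Rightarrow> real) \<Rightarrow> nat \<Rightarrow> real" where
  "Yvec n1 p \<sigma>1 \<sigma>2 \<beta> \<omega> i = (\<Sum>j<p. Xmat \<omega> i j * \<beta> j) + Zvec n1 \<sigma>1 \<sigma>2 \<omega> i"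

definition ind :: "nat set \<Rightarrow> nat \<Rightarrow> real" where
  "ind S j = (if j \<in> S then 1 else 0)"

definition resid :: "nat \<Rightarrow> nat \<Rightarrow> (nat \<Rightarrow> real) \<Rightarrow> ((nat \<times> nat + nat) \<Rightarrow> real) \<Rightarrow> (nat \<Rightarrow> real) \<Rightarrow> real" where
  "resid n p Y \<omega> b = (\<Sum>i<n. (Y i - (\<Sum>j<p. Xmat \<omega> i j * b j))\<^sup>2)"

definition supp :: "nat \<Rightarrow> (nat \<Rightarrow> real) \<Rightarrow> nat set" where
  "supp p \<beta> = {j. j < p \<and> \<beta> j \<noteq> 0}"

end

theory Submission
  imports Defs
begin


lemma std_gauss_prob: "prob_space std_gauss"
  unfolding std_gauss_def by (auto intro: prob_space_normal_density)

lemma nn_integral_normal_density_one: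
  "0 < s \<Longrightarrow> (\<integral>\<^sup>+x. ennreal (normal_density \<mu> s x) \<partial>lborel) = 1"
  by (subst nn_integral_eq_integral) auto

lemma gauss_1d:
  fixes \<alpha> \<beta> :: real
  assumes "\<alpha> < 1/2"
  shows "(\<integral>\<^sup>+x. ennreal (exp (\<alpha>*x\<^sup>2 + \<beta>*x)) \<partial>std_gauss)
       = ennreal (exp (\<beta>\<^sup>2/(2*(1-2*\<alpha>))) / sqrt (1-2*\<alpha>))"
proof -
  define A where "A = 1 - 2*\<alpha>"
  have A: "A > 0" using assms by (simp add: A_def)
  define \<mu> where "\<mu> = \<beta> / A"
  define s where "s = 1 / sqrt A"
  define K where "K = exp (\<beta>\<^sup>2/(2*A)) / sqrt A"
  have s2: "s\<^sup>2 = 1 / A" using A by (simp add: s_def power_divide)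
  have pt: "std_normal_density x * exp (\<alpha>*x\<^sup>2 + \<beta>*x) = K * normal_density \<mu> s x" for x
  proof -
    have "K * normal_density \<mu> s x = exp (\<beta>\<^sup>2/(2*A)) / sqrt A * (1 / sqrt (2*pi/A)) * exp (-(x-\<mu>)\<^sup>2 * A / 2)"
      unfolding K_def normal_density_def s2 using A by (simp add: field_simps)
    also have "\<dots> = 1 / sqrt (2*pi) * exp (\<beta>\<^sup>2/(2*A) + (-(x-\<mu>)\<^sup>2 * A / 2))"
    proof -
      have "exp (\<beta>\<^sup>2/(2*A)) * exp (-(x-\<mu>)\<^sup>2 * A / 2) = exp (\<beta>\<^sup>2/(2*A) + (-(x-\<mu>)\<^sup>2 * A / 2))"
        by (rule exp_add[symmetric])
      moreover have "1 / sqrt (2*pi/A) / sqrt A = 1 / sqrt (2*pi)"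
        using A by (simp add: real_sqrt_divide)
      ultimately show ?thesis by (simp only: flip: \<open>1 / sqrt (2*pi/A) / sqrt A = 1 / sqrt (2*pi)\<close>) (simp add: field_simps)
    qed
    also have "\<beta>\<^sup>2/(2*A) + (-(x-\<mu>)\<^sup>2 * A / 2) = - x\<^sup>2/2 + (\<alpha>*x\<^sup>2 + \<beta>*x)"
    proof -
      have "\<beta>\<^sup>2/(2*A) + (-(x-\<mu>)\<^sup>2 * A / 2) = - A * x\<^sup>2/2 + \<beta>*x"
        using A unfolding \<mu>_def by (simp add: field_simps power2_eq_square)
      moreover have "- A * x\<^sup>2/2 = - x\<^sup>2/2 + \<alpha>*x\<^sup>2" unfolding A_def by (simp add: field_simps)
      ultimately show ?thesis by linarith
    qed
    also have "exp (- x\<^sup>2/2 + (\<alpha>*x\<^sup>2 + \<beta>*x)) = exp (- x\<^sup>2/2) * exp (\<alpha>*x\<^sup>2 + \<beta>*x)"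
      by (rule exp_add)
    finally show ?thesis unfolding std_normal_density_def by simp
  qed
  have "(\<integral>\<^sup>+x. ennreal (exp (\<alpha>*x\<^sup>2 + \<beta>*x)) \<partial>std_gauss)
      = (\<integral>\<^sup>+x. ennreal (std_normal_density x) * ennreal (exp (\<alpha>*x\<^sup>2 + \<beta>*x)) \<partial>lborel)"
    unfolding std_gauss_def by (subst nn_integral_density) auto
  also have "\<dots> = (\<integral>\<^sup>+x. ennreal K * ennreal (normal_density \<mu> s x) \<partial>lborel)"
  proof (rule nn_integral_cong)
    fix x
    have "K \<ge> 0" unfolding K_def using A by simp
    then show "ennreal (std_normal_density x) * ennreal (exp (\<alpha>*x\<^sup>2 + \<beta>*x)) = ennreal K * ennreal (normal_density \<mu> s x)"
      by (simp add: ennreal_mult[symmetric] pt del: ennreal_mult')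
  qed
  also have "\<dots> = ennreal K"
    by (subst nn_integral_cmult) (auto simp: nn_integral_normal_density_one s_def A)
  finally show ?thesis by (simp add: K_def A_def)
qed

lemma gauss_shift:
  fixes c B u :: real
  assumes "c \<ge> 0"
  shows "(\<integral>\<^sup>+y. ennreal (exp (-c*(B + u*y)\<^sup>2)) \<partial>std_gauss)
       = ennreal (exp (-(c/(1+2*c*u\<^sup>2))*B\<^sup>2) / sqrt (1+2*c*u\<^sup>2))"
proof -
  have D: "1+2*c*u\<^sup>2 > 0" using assms by (simp add: add_pos_nonneg)
  have "(\<integral>\<^sup>+y. ennreal (exp (-c*(B + u*y)\<^sup>2)) \<partial>std_gauss)
      = (\<integral>\<^sup>+y. ennreal (exp (-c*B\<^sup>2)) * ennreal (exp ((-c*u\<^sup>2)*y\<^sup>2 + (-2*c*B*u)*y)) \<partial>std_gauss)"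
  proof (rule nn_integral_cong)
    fix y
    have "-c*(B + u*y)\<^sup>2 = -c*B\<^sup>2 + ((-c*u\<^sup>2)*y\<^sup>2 + (-2*c*B*u)*y)"
      by (simp add: power2_eq_square algebra_simps)
    then have "exp (-c*(B + u*y)\<^sup>2) = exp (-c*B\<^sup>2) * exp ((-c*u\<^sup>2)*y\<^sup>2 + (-2*c*B*u)*y)"
      by (simp only: exp_add[symmetric])
    then show "ennreal (exp (-c*(B + u*y)\<^sup>2)) = ennreal (exp (-c*B\<^sup>2)) * ennreal (exp ((-c*u\<^sup>2)*y\<^sup>2 + (-2*c*B*u)*y))"
      by (simp add: ennreal_mult[symmetric] del: ennreal_mult')
  qed
  also have "\<dots> = ennreal (exp (-c*B\<^sup>2)) * (\<integral>\<^sup>+y. ennreal (exp ((-c*u\<^sup>2)*y\<^sup>2 + (-2*c*B*u)*y)) \<partial>std_gauss)"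
    by (rule nn_integral_cmult) (simp add: std_gauss_def)
  also have "\<dots> = ennreal (exp (-c*B\<^sup>2)) * ennreal (exp ((-2*c*B*u)\<^sup>2/(2*(1-2*(-c*u\<^sup>2)))) / sqrt (1-2*(-c*u\<^sup>2)))"
  proof -
    have "0 \<le> c * u\<^sup>2" using assms by simp
    then show ?thesis by (subst gauss_1d) auto
  qed
  also have "\<dots> = ennreal (exp (-c*B\<^sup>2) * (exp ((-2*c*B*u)\<^sup>2/(2*(1-2*(-c*u\<^sup>2)))) / sqrt (1-2*(-c*u\<^sup>2))))"
    using assms by (intro ennreal_mult[symmetric]) (auto intro!: divide_nonneg_nonneg)
  also have "exp (-c*B\<^sup>2) * (exp ((-2*c*B*u)\<^sup>2/(2*(1-2*(-c*u\<^sup>2)))) / sqrt (1-2*(-c*u\<^sup>2)))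
      = exp (-c*B\<^sup>2 + (-2*c*B*u)\<^sup>2/(2*(1-2*(-c*u\<^sup>2)))) / sqrt (1+2*c*u\<^sup>2)"
    by (simp add: mult_exp_exp add.commute mult.assoc)
  also have "-c*B\<^sup>2 + (-2*c*B*u)\<^sup>2/(2*(1-2*(-c*u\<^sup>2))) = -(c/(1+2*c*u\<^sup>2))*B\<^sup>2"
    using D by (simp add: field_simps power2_eq_square)
  finally show ?thesis .
qed


lemma psf_gauss: "product_sigma_finite (\<lambda>_::'i. std_gauss)"
  unfolding product_sigma_finite_def
  using std_gauss_prob prob_space_imp_sigma_finite by blast

lemma meas_comp: "j \<in> I \<Longrightarrow> (\<lambda>x. x j) \<in> borel_measurable (PiM I (\<lambda>_. std_gauss))"
proof -
  assume "j \<in> I"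
  then have "(\<lambda>x. x j) \<in> measurable (PiM I (\<lambda>_. std_gauss)) std_gauss" by simp
  moreover have "measurable (PiM I (\<lambda>_. std_gauss)) std_gauss = borel_measurable (PiM I (\<lambda>_. std_gauss))"
    by (intro measurable_cong_sets) (simp_all add: std_gauss_def)
  ultimately show ?thesis by simp
qed

lemma meas_sum: "K \<subseteq> I \<Longrightarrow> (\<lambda>x. \<Sum>j\<in>K. v j * x j) \<in> borel_measurable (PiM I (\<lambda>_. std_gauss))"
  by (intro borel_measurable_sum borel_measurable_times borel_measurable_const meas_comp) auto

lemma gauss_sum:
  fixes J :: "'i set" and v :: "'i \<Rightarrow> real"
  assumes "finite J"
  shows "\<And>b c. c > 0 \<Longrightarrow> (\<integral>\<^sup>+x. ennreal (exp (-c * (b + (\<Sum>j\<in>J. v j * x j))\<^sup>2)) \<partial>PiM J (\<lambda>_. std_gauss))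
     = ennreal (exp (-(c/(1+2*c*(\<Sum>j\<in>J. (v j)\<^sup>2)))*b\<^sup>2) / sqrt (1+2*c*(\<Sum>j\<in>J. (v j)\<^sup>2)))"
  using assms
proof (induction J rule: finite_induct)
  case empty
  then show ?case by (simp add: PiM_empty nn_integral_count_space_finite)
next
  case (insert i J b c)
  interpret SG: product_sigma_finite "\<lambda>_::'i. std_gauss" by (rule psf_gauss)
  define V where "V = (\<Sum>j\<in>J. (v j)\<^sup>2)"
  have V: "V \<ge> 0" unfolding V_def by (auto intro: sum_nonneg)
  define c' where "c' = c/(1+2*c*(v i)\<^sup>2)"
  have D: "1+2*c*(v i)\<^sup>2 > 0" using insert by (simp add: add_pos_nonneg)
  have c': "c' > 0" unfolding c'_def using D insert by simp
  have "(\<integral>\<^sup>+x. ennreal (exp (-c * (b + (\<Sum>j\<in>insert i J. v j * x j))\<^sup>2)) \<partial>PiM (insert i J) (\<lambda>_. std_gauss))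
     = (\<integral>\<^sup>+x. (\<integral>\<^sup>+y. ennreal (exp (-c * (b + (\<Sum>j\<in>insert i J. v j * (x(i:=y)) j))\<^sup>2)) \<partial>std_gauss) \<partial>PiM J (\<lambda>_. std_gauss))"
  proof -
    have [measurable]: "(\<lambda>x. \<Sum>j\<in>insert i J. v j * x j) \<in> borel_measurable (PiM (insert i J) (\<lambda>_. std_gauss))"
      by (rule meas_sum) simp
    have "(\<lambda>x. ennreal (exp (-c * (b + (\<Sum>j\<in>insert i J. v j * x j))\<^sup>2))) \<in> borel_measurable (PiM (insert i J) (\<lambda>_. std_gauss))"
      by measurable
    then show ?thesis using insert by (subst SG.product_nn_integral_insert) auto
  qed
  also have "\<dots> = (\<integral>\<^sup>+x. (\<integral>\<^sup>+y. ennreal (exp (-c * ((b + (\<Sum>j\<in>J. v j * x j)) + v i * y)\<^sup>2)) \<partial>std_gauss) \<partial>PiM J (\<lambda>_. std_gauss))"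
  proof (intro nn_integral_cong)
    fix x y
    have "(\<Sum>j\<in>J. v j * (x(i:=y)) j) = (\<Sum>j\<in>J. v j * x j)"
      using insert by (intro sum.cong) auto
    then show "ennreal (exp (-c * (b + (\<Sum>j\<in>insert i J. v j * (x(i:=y)) j))\<^sup>2)) = ennreal (exp (-c * ((b + (\<Sum>j\<in>J. v j * x j)) + v i * y)\<^sup>2))"
      using insert by (simp add: algebra_simps)
  qed
  also have "\<dots> = (\<integral>\<^sup>+x. ennreal (1 / sqrt (1+2*c*(v i)\<^sup>2)) * ennreal (exp (-c' * (b + (\<Sum>j\<in>J. v j * x j))\<^sup>2)) \<partial>PiM J (\<lambda>_. std_gauss))"
  proof (intro nn_integral_cong)
    fix x
    show "(\<integral>\<^sup>+y. ennreal (exp (-c * ((b + (\<Sum>j\<in>J. v j * x j)) + v i * y)\<^sup>2)) \<partial>std_gauss) = ennreal (1 / sqrt (1+2*c*(v i)\<^sup>2)) * ennreal (exp (-c' * (b + (\<Sum>j\<in>J. v j * x j))\<^sup>2))"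
      using insert D by (subst gauss_shift) (auto simp: c'_def ennreal_mult[symmetric] simp del: ennreal_mult')
  qed
  also have "\<dots> = ennreal (1 / sqrt (1+2*c*(v i)\<^sup>2)) * (\<integral>\<^sup>+x. ennreal (exp (-c' * (b + (\<Sum>j\<in>J. v j * x j))\<^sup>2)) \<partial>PiM J (\<lambda>_. std_gauss))"
  proof (rule nn_integral_cmult)
    have [measurable]: "(\<lambda>x. \<Sum>j\<in>J. v j * x j) \<in> borel_measurable (PiM J (\<lambda>_. std_gauss))"
      by (rule meas_sum) simp
    show "(\<lambda>x. ennreal (exp (-c' * (b + (\<Sum>j\<in>J. v j * x j))\<^sup>2))) \<in> borel_measurable (PiM J (\<lambda>_. std_gauss))"
      by measurable
  qed
  also have "\<dots> = ennreal (1 / sqrt (1+2*c*(v i)\<^sup>2)) * ennreal (exp (-(c'/(1+2*c'*V))*b\<^sup>2) / sqrt (1+2*c'*V))"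
    using insert c' by (simp add: V_def)
  also have "\<dots> = ennreal (exp (-(c'/(1+2*c'*V))*b\<^sup>2) / (sqrt (1+2*c*(v i)\<^sup>2) * sqrt (1+2*c'*V)))"
    using D c' V by (subst ennreal_mult[symmetric]) (auto intro!: divide_nonneg_nonneg add_nonneg_nonneg)
  finally have R: "(\<integral>\<^sup>+x. ennreal (exp (-c * (b + (\<Sum>j\<in>insert i J. v j * x j))\<^sup>2)) \<partial>PiM (insert i J) (\<lambda>_. std_gauss)) = ennreal (exp (-(c'/(1+2*c'*V))*b\<^sup>2) / (sqrt (1+2*c*(v i)\<^sup>2) * sqrt (1+2*c'*V)))" .
  have E1: "(1+2*c*(v i)\<^sup>2) * (1+2*c'*V) = 1+2*c*(\<Sum>j\<in>insert i J. (v j)\<^sup>2)"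
    using insert D unfolding c'_def V_def by (simp add: field_simps)
  have cc: "c' * (1+2*c*(v i)\<^sup>2) = c" unfolding c'_def using D by simp
  have E2: "c'/(1+2*c'*V) = c/(1+2*c*(\<Sum>j\<in>insert i J. (v j)\<^sup>2))"
  proof -
    have "c'/(1+2*c'*V) = (c' * (1+2*c*(v i)\<^sup>2)) / ((1+2*c*(v i)\<^sup>2)*(1+2*c'*V))"
      using D by simp
    also have "\<dots> = c/(1+2*c*(\<Sum>j\<in>insert i J. (v j)\<^sup>2))" unfolding cc E1 ..
    finally show ?thesis .
  qed
  show ?case unfolding R E2 real_sqrt_mult[symmetric] E1 ..
qed


lemma local_meas:
  fixes g :: "('i \<Rightarrow> real) \<Rightarrow> ennreal"
  assumes "K \<subseteq> I" "g \<in> borel_measurable (PiM K (\<lambda>_. std_gauss))"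
    "\<And>\<omega> \<omega>'. (\<And>k. k \<in> K \<Longrightarrow> \<omega> k = \<omega>' k) \<Longrightarrow> g \<omega> = g \<omega>'"
  shows "g \<in> borel_measurable (PiM I (\<lambda>_. std_gauss))"
proof -
  have "g = (\<lambda>\<omega>. g (restrict \<omega> K))" by (rule ext, rule assms(3)) simp
  moreover have "(\<lambda>\<omega>. g (restrict \<omega> K)) \<in> borel_measurable (PiM I (\<lambda>_. std_gauss))"
    by (rule measurable_compose[OF measurable_restrict_subset[OF assms(1)] assms(2)])
  ultimately show ?thesis by simp
qed

lemma prod_rows:
  fixes R :: "nat \<Rightarrow> 'i set" and g :: "nat \<Rightarrow> ('i \<Rightarrow> real) \<Rightarrow> ennreal"
  assumes fin: "\<And>i. finite (R i)" and disj: "\<And>i j. i \<noteq> j \<Longrightarrow> R i \<inter> R j = {}"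
    and meas: "\<And>i. g i \<in> borel_measurable (PiM (R i) (\<lambda>_. std_gauss))"
    and loc: "\<And>i \<omega> \<omega>'. (\<And>k. k \<in> R i \<Longrightarrow> \<omega> k = \<omega>' k) \<Longrightarrow> g i \<omega> = g i \<omega>'"
  shows "(\<integral>\<^sup>+\<omega>. (\<Prod>i<n. g i \<omega>) \<partial>PiM (\<Union>i<n. R i) (\<lambda>_. std_gauss))
       = (\<Prod>i<n. \<integral>\<^sup>+\<omega>. g i \<omega> \<partial>PiM (R i) (\<lambda>_. std_gauss))"
proof (induction n)
  case 0
  then show ?case by (simp add: PiM_empty nn_integral_count_space_finite)
next
  case (Suc n)
  interpret SG: product_sigma_finite "\<lambda>_::'i. std_gauss" by (rule psf_gauss)
  define I where "I = (\<Union>i<n. R i)"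
  define J where "J = R n"
  have IJ: "I \<inter> J = {}" unfolding I_def J_def using disj by (auto, metis disjoint_iff less_irrefl)
  have fI: "finite I" "finite J" unfolding I_def J_def using fin by auto
  have U: "(\<Union>i<Suc n. R i) = I \<union> J" unfolding I_def J_def lessThan_Suc by auto
  have mI: "\<And>i. i < n \<Longrightarrow> g i \<in> borel_measurable (PiM I (\<lambda>_. std_gauss))"
    by (rule local_meas[OF _ meas loc]) (auto simp: I_def)
  have mIJ: "\<And>i. i < Suc n \<Longrightarrow> g i \<in> borel_measurable (PiM (I \<union> J) (\<lambda>_. std_gauss))"
    by (rule local_meas[OF _ meas loc]) (auto simp: I_def J_def less_Suc_eq)
  have mJ: "g n \<in> borel_measurable (PiM J (\<lambda>_. std_gauss))" using meas by (simp add: J_def)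
  have mP: "(\<lambda>\<omega>. \<Prod>i<n. g i \<omega>) \<in> borel_measurable (PiM I (\<lambda>_. std_gauss))"
    by (rule borel_measurable_prod_ennreal) (use mI in auto)
  have "(\<integral>\<^sup>+\<omega>. (\<Prod>i<Suc n. g i \<omega>) \<partial>PiM (\<Union>i<Suc n. R i) (\<lambda>_. std_gauss))
     = (\<integral>\<^sup>+x. (\<integral>\<^sup>+y. (\<Prod>i<Suc n. g i (merge I J (x,y))) \<partial>PiM J (\<lambda>_. std_gauss)) \<partial>PiM I (\<lambda>_. std_gauss))"
    unfolding U by (rule SG.product_nn_integral_fold[OF IJ fI]) (rule borel_measurable_prod_ennreal, use mIJ in auto)
  also have "\<dots> = (\<integral>\<^sup>+x. (\<integral>\<^sup>+y. (\<Prod>i<n. g i x) * g n y \<partial>PiM J (\<lambda>_. std_gauss)) \<partial>PiM I (\<lambda>_. std_gauss))"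
  proof (intro nn_integral_cong)
    fix x y
    have "g i (merge I J (x,y)) = g i x" if "i < n" for i
    proof (rule loc)
      fix k assume "k \<in> R i"
      then have "k \<in> I" using that by (auto simp: I_def)
      then show "merge I J (x,y) k = x k" using IJ by simp
    qed
    moreover have "g n (merge I J (x,y)) = g n y"
    proof (rule loc)
      fix k assume "k \<in> R n"
      then have "k \<in> J" by (auto simp: J_def)
      then show "merge I J (x,y) k = y k" using IJ by simp
    qed
    ultimately show "(\<Prod>i<Suc n. g i (merge I J (x,y))) = (\<Prod>i<n. g i x) * g n y"
      by (simp add: prod.lessThan_Suc)
  qed
  also have "\<dots> = (\<integral>\<^sup>+x. (\<Prod>i<n. g i x) * (\<integral>\<^sup>+y. g n y \<partial>PiM J (\<lambda>_. std_gauss)) \<partial>PiM I (\<lambda>_. std_gauss))"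
    by (intro nn_integral_cong nn_integral_cmult mJ)
  also have "\<dots> = (\<integral>\<^sup>+x. (\<Prod>i<n. g i x) \<partial>PiM I (\<lambda>_. std_gauss)) * (\<integral>\<^sup>+y. g n y \<partial>PiM J (\<lambda>_. std_gauss))"
    by (rule nn_integral_multc[OF mP])
  also have "\<dots> = (\<Prod>i<Suc n. \<integral>\<^sup>+\<omega>. g i \<omega> \<partial>PiM (R i) (\<lambda>_. std_gauss))"
    using Suc by (simp add: I_def J_def)
  finally show ?case .
qed


lemma row_integral:
  fixes J :: "'i set" and r :: 'i and v :: "'i \<Rightarrow> real" and \<sigma> t :: real
  assumes fJ: "finite J" and r: "r \<notin> J" and c: "t - 2*t\<^sup>2*\<sigma>\<^sup>2 > 0"
  shows "(\<integral>\<^sup>+\<omega>. ennreal (exp (-t*(((\<Sum>j\<in>J. v j * \<omega> j) + \<sigma>*\<omega> r)\<^sup>2 - (\<sigma>*\<omega> r)\<^sup>2))) \<partial>PiM (insert r J) (\<lambda>_. std_gauss))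
       = ennreal (1 / sqrt (1 + 2*(t - 2*t\<^sup>2*\<sigma>\<^sup>2)*(\<Sum>j\<in>J. (v j)\<^sup>2)))"
proof -
  interpret SG: product_sigma_finite "\<lambda>_::'i. std_gauss" by (rule psf_gauss)
  define c where "c = t - 2*t\<^sup>2*\<sigma>\<^sup>2"
  have [measurable]: "(\<lambda>x. \<Sum>j\<in>J. v j * x j) \<in> borel_measurable (PiM (insert r J) (\<lambda>_. std_gauss))"
    by (rule meas_sum) auto
  have [measurable]: "(\<lambda>x. x r) \<in> borel_measurable (PiM (insert r J) (\<lambda>_. std_gauss))"
    by (rule meas_comp) auto
  have M: "(\<lambda>\<omega>. ennreal (exp (-t*(((\<Sum>j\<in>J. v j * \<omega> j) + \<sigma>*\<omega> r)\<^sup>2 - (\<sigma>*\<omega> r)\<^sup>2)))) \<in> borel_measurable (PiM (insert r J) (\<lambda>_. std_gauss))"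
    by measurable
  have "(\<integral>\<^sup>+\<omega>. ennreal (exp (-t*(((\<Sum>j\<in>J. v j * \<omega> j) + \<sigma>*\<omega> r)\<^sup>2 - (\<sigma>*\<omega> r)\<^sup>2))) \<partial>PiM (insert r J) (\<lambda>_. std_gauss))
     = (\<integral>\<^sup>+x. (\<integral>\<^sup>+y. ennreal (exp (-t*(((\<Sum>j\<in>J. v j * (x(r:=y)) j) + \<sigma>*(x(r:=y)) r)\<^sup>2 - (\<sigma>*(x(r:=y)) r)\<^sup>2))) \<partial>std_gauss) \<partial>PiM J (\<lambda>_. std_gauss))"
    by (rule SG.product_nn_integral_insert[OF fJ r M])
  also have "\<dots> = (\<integral>\<^sup>+x. ennreal (exp (-c * (0 + (\<Sum>j\<in>J. v j * x j))\<^sup>2)) \<partial>PiM J (\<lambda>_. std_gauss))"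
  proof (intro nn_integral_cong)
    fix x
    define U where "U = (\<Sum>j\<in>J. v j * x j)"
    have SU: "(\<Sum>j\<in>J. v j * (x(r:=y)) j) = U" for y
      unfolding U_def using r by (intro sum.cong) auto
    have "(\<integral>\<^sup>+y. ennreal (exp (-t*(((\<Sum>j\<in>J. v j * (x(r:=y)) j) + \<sigma>*(x(r:=y)) r)\<^sup>2 - (\<sigma>*(x(r:=y)) r)\<^sup>2))) \<partial>std_gauss)
       = (\<integral>\<^sup>+y. ennreal (exp (-t*U\<^sup>2)) * ennreal (exp (0*y\<^sup>2 + (-2*t*\<sigma>*U)*y)) \<partial>std_gauss)"
    proof (intro nn_integral_cong)
      fix y
      have "-t*((U + \<sigma>*y)\<^sup>2 - (\<sigma>*y)\<^sup>2) = -t*U\<^sup>2 + (0*y\<^sup>2 + (-2*t*\<sigma>*U)*y)"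
        by (simp add: power2_eq_square algebra_simps)
      then have "exp (-t*((U + \<sigma>*y)\<^sup>2 - (\<sigma>*y)\<^sup>2)) = exp (-t*U\<^sup>2) * exp (0*y\<^sup>2 + (-2*t*\<sigma>*U)*y)"
        by (simp only: exp_add[symmetric])
      then show "ennreal (exp (-t*(((\<Sum>j\<in>J. v j * (x(r:=y)) j) + \<sigma>*(x(r:=y)) r)\<^sup>2 - (\<sigma>*(x(r:=y)) r)\<^sup>2))) = ennreal (exp (-t*U\<^sup>2)) * ennreal (exp (0*y\<^sup>2 + (-2*t*\<sigma>*U)*y))"
        unfolding SU fun_upd_same by (simp add: ennreal_mult[symmetric] del: ennreal_mult')
    qed
    also have "\<dots> = ennreal (exp (-t*U\<^sup>2)) * (\<integral>\<^sup>+y. ennreal (exp (0*y\<^sup>2 + (-2*t*\<sigma>*U)*y)) \<partial>std_gauss)"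
      by (rule nn_integral_cmult) (simp add: std_gauss_def)
    also have "\<dots> = ennreal (exp (-t*U\<^sup>2)) * ennreal (exp ((-2*t*\<sigma>*U)\<^sup>2/(2*(1-2*0))) / sqrt (1-2*0))"
      by (subst gauss_1d) auto
    also have "\<dots> = ennreal (exp (-t*U\<^sup>2 + (-2*t*\<sigma>*U)\<^sup>2/2))"
      by (simp add: ennreal_mult[symmetric] mult_exp_exp del: ennreal_mult')
    also have "-t*U\<^sup>2 + (-2*t*\<sigma>*U)\<^sup>2/2 = -c * (0 + U)\<^sup>2"
      unfolding c_def by (simp add: power2_eq_square algebra_simps)
    finally show "(\<integral>\<^sup>+y. ennreal (exp (-t*(((\<Sum>j\<in>J. v j * (x(r:=y)) j) + \<sigma>*(x(r:=y)) r)\<^sup>2 - (\<sigma>*(x(r:=y)) r)\<^sup>2))) \<partial>std_gauss) = ennreal (exp (-c * (0 + (\<Sum>j\<in>J. v j * x j))\<^sup>2))"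
      unfolding U_def .
  qed
  also have "\<dots> = ennreal (exp (-(c/(1+2*c*(\<Sum>j\<in>J. (v j)\<^sup>2)))*0\<^sup>2) / sqrt (1+2*c*(\<Sum>j\<in>J. (v j)\<^sup>2)))"
    by (rule gauss_sum[OF fJ]) (use c in \<open>simp add: c_def\<close>)
  finally show ?thesis by (simp add: c_def)
qed


lemma inv_sqrt_pow:
  fixes X :: real assumes "0 < X"
  shows "(1 / sqrt X) ^ n = X powr (- (real n / 2))"
proof -
  have "1 / sqrt X = X powr (- (1/2))"
    using assms by (simp add: powr_minus_divide powr_half_sqrt)
  then have "(1 / sqrt X) ^ n = X powr (real n * (- (1/2)))"
    using assms by (simp add: powr_power)
  then show ?thesis by simp
qed


theorem proposition2:
  fixes n1 n2 p s :: nat and \<sigma>1 \<sigma>2 \<delta> :: real and \<beta> :: "nat \<Rightarrow> real" and S :: "nat set"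
  assumes "n1 \<ge> 1" and "n2 \<ge> 1"
    and "0 < \<sigma>1\<^sup>2" and "\<sigma>1\<^sup>2 < \<sigma>2\<^sup>2"
    and "\<forall>j<p. \<beta> j \<in> {0, 1}"
    and "card (supp p \<beta>) = s"
    and "0 < \<delta>" and "\<delta> < 1"
    and "S \<subseteq> {0..<p}" and "card S = s"
    and "real (card ((S - supp p \<beta>) \<union> (supp p \<beta> - S))) / 2 \<ge> \<delta> * real s"
  shows "measure (gauss_model (n1 + n2) p)
           {\<omega> \<in> space (gauss_model (n1 + n2) p).
              resid (n1 + n2) p (Yvec n1 p \<sigma>1 \<sigma>2 \<beta> \<omega>) \<omega> (ind S)
              - resid (n1 + n2) p (Yvec n1 p \<sigma>1 \<sigma>2 \<beta> \<omega>) \<omega> (ind (supp p \<beta>)) \<le> 0}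
         \<le> (1 + \<delta> * (2 * \<sigma>2\<^sup>2 - \<sigma>1\<^sup>2) * real s / (2 * \<sigma>2 ^ 4)) powr (- (real n1 / 2))
           * (1 + \<delta> * real s / (2 * \<sigma>2\<^sup>2)) powr (- (real n2 / 2))"
proof -
  let ?n = "n1+n2"
  define M where "M = gauss_model ?n p"
  define sp where "sp = supp p \<beta>"
  define D where "D = (S - sp) \<union> (sp - S)"
  define a where "a = real (card D)"
  define q1 where "q1 = \<sigma>1\<^sup>2"
  define q2 where "q2 = \<sigma>2\<^sup>2"
  have q1: "0 < q1" and q12: "q1 < q2" using assms(3,4) by (simp_all add: q1_def q2_def)
  define t where "t = 1/(4*q2)"
  define sg where "sg i = (if i < n1 then \<sigma>1 else \<sigma>2)" for i :: nat
  define vv where "vv j = \<beta> j - ind S j" for j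
  define v where "v k = (case k of Inl ij \<Rightarrow> vv (snd ij) | Inr _ \<Rightarrow> 0)" for k :: "nat \<times> nat + nat"
  define J where "J i = (\<lambda>j. Inl (i,j) :: nat \<times> nat + nat) ` {0..<p}" for i :: nat
  define R where "R i = insert (Inr i) (J i)" for i
  define u where "u \<omega> i = (\<Sum>j<p. Xmat \<omega> i j * vv j)" for \<omega> i
  define \<Delta> where "\<Delta> \<omega> = resid ?n p (Yvec n1 p \<sigma>1 \<sigma>2 \<beta> \<omega>) \<omega> (ind S) - resid ?n p (Yvec n1 p \<sigma>1 \<sigma>2 \<beta> \<omega>) \<omega> (ind sp)" for \<omega>
  define g where "g i \<omega> = ennreal (exp (-t*(((\<Sum>k\<in>J i. v k * \<omega> k) + sg i * \<omega> (Inr i))\<^sup>2 - (sg i * \<omega> (Inr i))\<^sup>2)))" for i \<omega>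
  define A where "A = {\<omega> \<in> space M. \<Delta> \<omega> \<le> 0}"
  have t: "t > 0" using q1 q12 by (simp add: t_def)
  have beta_ind: "\<beta> j = ind sp j" if "j < p" for j
    using assms(5) that by (auto simp: ind_def sp_def supp_def)
  have Delta: "\<Delta> \<omega> = (\<Sum>i<?n. ((u \<omega> i + Zvec n1 \<sigma>1 \<sigma>2 \<omega> i)\<^sup>2 - (Zvec n1 \<sigma>1 \<sigma>2 \<omega> i)\<^sup>2))" for \<omega>
  proof -
    have e1: "Yvec n1 p \<sigma>1 \<sigma>2 \<beta> \<omega> i - (\<Sum>j<p. Xmat \<omega> i j * ind S j) = u \<omega> i + Zvec n1 \<sigma>1 \<sigma>2 \<omega> i" for i
      by (simp add: Yvec_def u_def vv_def right_diff_distrib sum_subtractf)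
    have e2: "Yvec n1 p \<sigma>1 \<sigma>2 \<beta> \<omega> i - (\<Sum>j<p. Xmat \<omega> i j * ind sp j) = Zvec n1 \<sigma>1 \<sigma>2 \<omega> i" for i
    proof -
      have "(\<Sum>j<p. Xmat \<omega> i j * \<beta> j) = (\<Sum>j<p. Xmat \<omega> i j * ind sp j)"
        by (rule sum.cong) (auto simp: beta_ind)
      then show ?thesis by (simp add: Yvec_def)
    qed
    show ?thesis unfolding \<Delta>_def resid_def e1 e2 by (simp add: sum_subtractf)
  qed
  have Jsum: "(\<Sum>k\<in>J i. v k * \<omega> k) = u \<omega> i" for \<omega> i
  proof -
    have "inj_on (\<lambda>j. Inl (i,j) :: nat \<times> nat + nat) {0..<p}" by (auto simp: inj_on_def)
    then show ?thesis unfolding J_def u_def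
      by (simp add: sum.reindex v_def Xmat_def atLeast0LessThan mult.commute)
  qed
  have gi: "g i \<omega> = ennreal (exp (-t*((u \<omega> i + Zvec n1 \<sigma>1 \<sigma>2 \<omega> i)\<^sup>2 - (Zvec n1 \<sigma>1 \<sigma>2 \<omega> i)\<^sup>2)))" for i \<omega>
    unfolding g_def Jsum by (simp add: Zvec_def Wvec_def sg_def)
  have expD: "ennreal (exp (-t*\<Delta> \<omega>)) = (\<Prod>i<?n. g i \<omega>)" for \<omega>
  proof -
    have "exp (-t*\<Delta> \<omega>) = (\<Prod>i<?n. exp (-t*((u \<omega> i + Zvec n1 \<sigma>1 \<sigma>2 \<omega> i)\<^sup>2 - (Zvec n1 \<sigma>1 \<sigma>2 \<omega> i)\<^sup>2)))"
    proof -
      have "-t*\<Delta> \<omega> = (\<Sum>i<?n. -t*((u \<omega> i + Zvec n1 \<sigma>1 \<sigma>2 \<omega> i)\<^sup>2 - (Zvec n1 \<sigma>1 \<sigma>2 \<omega> i)\<^sup>2))"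
        unfolding Delta by (simp add: sum_distrib_left)
      then show ?thesis by (simp add: exp_sum)
    qed
    then show ?thesis unfolding gi by (simp add: prod_ennreal)
  qed
  have gidx: "gidx ?n p = (\<Union>i<?n. R i)"
    by (auto simp: gidx_def R_def J_def)
  have Markov: "emeasure M A \<le> (\<integral>\<^sup>+\<omega>. ennreal (exp (-t*\<Delta> \<omega>)) \<partial>M)"
  proof (cases "A \<in> sets M")
    case True
    have "emeasure M A = (\<integral>\<^sup>+\<omega>. indicator A \<omega> \<partial>M)" using True by simp
    also have "\<dots> \<le> (\<integral>\<^sup>+\<omega>. ennreal (exp (-t*\<Delta> \<omega>)) \<partial>M)"
    proof (rule nn_integral_mono)
      fix \<omega>
      show "indicator A \<omega> \<le> ennreal (exp (-t*\<Delta> \<omega>))"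
      proof (cases "\<omega> \<in> A")
        case True
        then have "\<Delta> \<omega> \<le> 0" by (simp add: A_def)
        then have "0 \<le> -t*\<Delta> \<omega>" using t by (simp add: mult_le_0_iff)
        then have "1 \<le> exp (-t*\<Delta> \<omega>)" by simp
        then show ?thesis using True by simp
      qed simp
    qed
    finally show ?thesis .
  next
    case False
    then show ?thesis by (simp add: emeasure_notin_sets)
  qed
  have finR: "finite (R i)" for i by (simp add: R_def J_def)
  have disjR: "R i \<inter> R j = {}" if "i \<noteq> j" for i j using that by (auto simp: R_def J_def)
  have measg: "g i \<in> borel_measurable (PiM (R i) (\<lambda>_. std_gauss))" for i
  proof -
    have [measurable]: "(\<lambda>x. \<Sum>k\<in>J i. v k * x k) \<in> borel_measurable (PiM (R i) (\<lambda>_. std_gauss))"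
      by (rule meas_sum) (auto simp: R_def)
    have [measurable]: "(\<lambda>x. x (Inr i)) \<in> borel_measurable (PiM (R i) (\<lambda>_. std_gauss))"
      by (rule meas_comp) (auto simp: R_def)
    show ?thesis unfolding g_def by measurable
  qed
  have locg: "g i \<omega> = g i \<omega>'" if "\<And>k. k \<in> R i \<Longrightarrow> \<omega> k = \<omega>' k" for i \<omega> \<omega>'
  proof -
    have "(\<Sum>k\<in>J i. v k * \<omega> k) = (\<Sum>k\<in>J i. v k * \<omega>' k)"
      using that by (intro sum.cong) (auto simp: R_def)
    moreover have "\<omega> (Inr i) = \<omega>' (Inr i)" using that by (simp add: R_def)
    ultimately show ?thesis unfolding g_def by simp
  qed
  have Vsum: "(\<Sum>k\<in>J i. (v k)\<^sup>2) = a" for i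
  proof -
    have "(\<Sum>k\<in>J i. (v k)\<^sup>2) = (\<Sum>k\<in>J i. v k * (\<lambda>k. v k) k)" by (simp add: power2_eq_square)
    also have "\<dots> = (\<Sum>j<p. v (Inl (i,j)) * vv j)"
    proof -
      have "inj_on (\<lambda>j. Inl (i,j) :: nat \<times> nat + nat) {0..<p}" by (auto simp: inj_on_def)
      then show ?thesis unfolding J_def by (simp add: sum.reindex v_def atLeast0LessThan)
    qed
    also have "\<dots> = (\<Sum>j<p. if j \<in> D then 1 else 0)"
    proof (rule sum.cong)
      fix j assume "j \<in> {..<p}"
      then have jp: "j < p" by simp
      then have "\<beta> j \<in> {0,1}" using assms(5) by simp
      moreover have "j \<in> sp \<longleftrightarrow> \<beta> j \<noteq> 0" using jp by (simp add: sp_def supp_def)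
      ultimately show "v (Inl (i,j)) * vv j = (if j \<in> D then 1 else 0)"
        by (auto simp: v_def vv_def D_def ind_def)
    qed simp
    also have "\<dots> = real (card ({..<p} \<inter> D))" by (simp add: sum.If_cases)
    also have "{..<p} \<inter> D = D" using assms(9) by (auto simp: D_def sp_def supp_def)
    finally show ?thesis by (simp add: a_def)
  qed
  define c where "c i = t - 2*t\<^sup>2*(sg i)\<^sup>2" for i
  define F where "F i = 1 / sqrt (1 + 2 * c i * a)" for i
  have sgq: "(sg i)\<^sup>2 \<le> q2" for i using q12 by (simp add: sg_def q1_def q2_def)
  have cpos: "c i > 0" for i
  proof -
    have "c i = (2*q2 - (sg i)\<^sup>2) / (8*q2\<^sup>2)" using q1 q12 unfolding c_def t_def
      by (simp add: field_simps power2_eq_square)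
    moreover have "2*q2 - (sg i)\<^sup>2 > 0" using sgq[of i] q1 q12 by linarith
    ultimately show ?thesis using q1 q12 by simp
  qed
  have rowI: "(\<integral>\<^sup>+\<omega>. g i \<omega> \<partial>PiM (R i) (\<lambda>_. std_gauss)) = ennreal (F i)" for i
  proof -
    have "Inr i \<notin> J i" by (auto simp: J_def)
    from row_integral[of "J i" "Inr i" t "sg i" v, OF _ this]
    show ?thesis using cpos[of i] unfolding g_def R_def F_def Vsum c_def by (simp add: J_def)
  qed
  have a0: "a \<ge> 0" by (simp add: a_def)
  have Fnn: "F i \<ge> 0" for i using cpos[of i] a0 by (simp add: F_def)
  have "emeasure M A \<le> (\<Prod>i<?n. ennreal (F i))"
  proof -
    have "(\<integral>\<^sup>+\<omega>. ennreal (exp (-t*\<Delta> \<omega>)) \<partial>M) = (\<integral>\<^sup>+\<omega>. (\<Prod>i<?n. g i \<omega>) \<partial>PiM (\<Union>i<?n. R i) (\<lambda>_. std_gauss))"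
      unfolding M_def gauss_model_def gidx expD ..
    also have "\<dots> = (\<Prod>i<?n. \<integral>\<^sup>+\<omega>. g i \<omega> \<partial>PiM (R i) (\<lambda>_. std_gauss))"
      by (rule prod_rows[OF finR disjR measg locg])
    finally show ?thesis using Markov by (simp add: rowI)
  qed
  then have mA: "measure M A \<le> (\<Prod>i<?n. F i)"
    unfolding measure_def using Fnn by (intro enn2real_leI) (auto simp: prod_nonneg prod_ennreal)
  define B1 where "B1 = 1 + \<delta> * (2 * \<sigma>2\<^sup>2 - \<sigma>1\<^sup>2) * real s / (2 * \<sigma>2 ^ 4)"
  define B2 where "B2 = 1 + \<delta> * real s / (2 * \<sigma>2\<^sup>2)"
  have a2: "a \<ge> 2 * \<delta> * real s" using assms(11) by (simp add: a_def D_def sp_def)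
  have prodsplit: "(\<Prod>i<?n. F i) = F 0 ^ n1 * F n1 ^ n2"
  proof -
    have "{..<?n} = {..<n1} \<union> {n1..<?n}" by auto
    then have "(\<Prod>i<?n. F i) = (\<Prod>i\<in>{..<n1}. F i) * (\<Prod>i\<in>{n1..<?n}. F i)"
      by (metis prod.union_disjoint finite_lessThan finite_atLeastLessThan ivl_disj_int_one(2) lessThan_atLeast0)
    also have "(\<Prod>i\<in>{..<n1}. F i) = (\<Prod>i\<in>{..<n1}. F 0)"
      using assms(1) by (intro prod.cong) (auto simp: F_def c_def sg_def)
    also have "(\<Prod>i\<in>{n1..<?n}. F i) = (\<Prod>i\<in>{n1..<?n}. F n1)"
      by (intro prod.cong) (auto simp: F_def c_def sg_def)
    finally show ?thesis by simp
  qed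
  have s0: "0 \<le> real s" by simp
  have B1pos: "0 < B1"
  proof -
    have "0 \<le> \<delta> * (2 * \<sigma>2\<^sup>2 - \<sigma>1\<^sup>2) * real s / (2 * \<sigma>2 ^ 4)"
      using assms(7) q1 q12 unfolding q1_def q2_def by (intro divide_nonneg_nonneg mult_nonneg_nonneg) (auto, smt (verit) zero_le_power2)
    then show ?thesis by (simp add: B1_def)
  qed
  have B2pos: "0 < B2"
  proof -
    have "0 \<le> \<delta> * real s / (2 * \<sigma>2\<^sup>2)" using assms(7) by simp
    then show ?thesis by (simp add: B2_def)
  qed
  have q2: "q2 > 0" using q1 q12 by simp
  have c0: "c 0 = (2*q2 - q1) / (8*q2\<^sup>2)"
  proof -
    have "c 0 = t - 2*t\<^sup>2*q1" using assms(1) by (simp add: c_def sg_def q1_def)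
    then show ?thesis using q2 unfolding t_def by (simp add: field_simps power2_eq_square)
  qed
  have cn1: "c n1 = 1 / (8*q2)"
  proof -
    have "c n1 = t - 2*t\<^sup>2*q2" by (simp add: c_def sg_def q2_def)
    then show ?thesis using q2 unfolding t_def by (simp add: field_simps power2_eq_square)
  qed
  have le1: "B1 \<le> 1 + 2 * c 0 * a"
  proof -
    have s4: "\<sigma>2 ^ 4 = q2\<^sup>2" unfolding q2_def power_mult[symmetric] by simp
    have "B1 = 1 + \<delta> * (2 * q2 - q1) * real s / (2 * q2\<^sup>2)"
      unfolding B1_def s4 by (simp add: q1_def q2_def)
    also have "\<dots> = 1 + 2 * c 0 * (2 * \<delta> * real s)" unfolding c0
      using q2 by (simp add: field_simps power2_eq_square)
    finally have "B1 = 1 + 2 * c 0 * (2 * \<delta> * real s)" .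
    also have "\<dots> \<le> 1 + 2 * c 0 * a" using a2 cpos[of 0] by simp
    finally show ?thesis .
  qed
  have le2: "B2 \<le> 1 + 2 * c n1 * a"
  proof -
    have "B2 = 1 + \<delta> * real s / (2 * q2)" unfolding B2_def by (simp add: q2_def)
    also have "\<dots> = 1 + 2 * c n1 * (2 * \<delta> * real s)" unfolding cn1
      using q2 by (simp add: field_simps)
    finally have "B2 = 1 + 2 * c n1 * (2 * \<delta> * real s)" .
    also have "\<dots> \<le> 1 + 2 * c n1 * a" using a2 cpos[of n1] by simp
    finally show ?thesis .
  qed
  have F1: "F 0 ^ n1 \<le> B1 powr (- (real n1 / 2))"
  proof -
    have "F 0 ^ n1 = (1 + 2 * c 0 * a) powr (- (real n1 / 2))"
      unfolding F_def using cpos[of 0] a0 by (intro inv_sqrt_pow) (simp add: add_pos_nonneg)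
    also have "\<dots> \<le> B1 powr (- (real n1 / 2))" by (rule powr_mono2'[OF _ B1pos le1]) simp
    finally show ?thesis .
  qed
  have F2: "F n1 ^ n2 \<le> B2 powr (- (real n2 / 2))"
  proof -
    have "F n1 ^ n2 = (1 + 2 * c n1 * a) powr (- (real n2 / 2))"
      unfolding F_def using cpos[of n1] a0 by (intro inv_sqrt_pow) (simp add: add_pos_nonneg)
    also have "\<dots> \<le> B2 powr (- (real n2 / 2))" by (rule powr_mono2'[OF _ B2pos le2]) simp
    finally show ?thesis .
  qed
  have "measure M A \<le> B1 powr (- (real n1 / 2)) * B2 powr (- (real n2 / 2))"
    using mA unfolding prodsplit
    by (rule order.trans) (rule mult_mono[OF F1 F2]; simp add: Fnn)
  then show ?thesis unfolding M_def A_def \<Delta>_def B1_def B2_def sp_def .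
qed

end
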